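(* Let $s,d,t$ be positive integers with $s-dt>0$, $\mathbb{F}$ a field, $\mathcal{C}$ a linear code over $\mathbb{F}$ of rate $(s-dt)/s$, and $\mathcal{L}$ a labeling of its coordinates by $[s]$ with $\Delta_{\mathcal{L}}(\mathcal{C})\ge dt+1$. Then there is a positive integer $j$ such that: (i) $\mathcal{C}$ has length $n=js$ and dimension $j(s-dt)$; (ii) $|\mathcal{L}^{-1}(\lambda)|=j$ for all $\lambda\in[s]$; (iii) after a suitable reordering of the coordinates of $\mathcal{C}$, $\mathcal{L}:[js]\to[s]$ is given by $\mathcal{L}(x)=\lceil x/j\rceil$.
   Context: A labeling is a surjection $\mathcal{L}:[n]\to[s]$, and $\mathcal{L}^{-1}(\lambda)=\{i:\mathcal{L}(i)=\lambda\}$. Labelweight: for $\mathbf{c}\in\mathbb{F}^n$, $\Delta_{\mathcal{L}}(\mathbf{c})=|\{\mathcal{L}(i): c_i\neq0\}|$; for a code $\mathcal{C}$, $\Delta_{\mathcal{L}}(\mathcal{C})=\min_{\mathbf{0}\ne\mathbf{c}\in\mathcal{C}}\Delta_{\mathcal{L}}(\mathbf{c})$. Rate of a linear code of dimension $k$ in $\mathbb{F}^n$ is $k/n$. *)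

theory Defs
  imports Complex_Main "HOL-Library.Function_Algebras"
begin

text \<open>Vectors of length n over a field are represented as functions
  nat => 'a supported on the coordinate set [n] = {1..n}.
  Scalar multiplication is pointwise.\<close>

definition fscale :: "'a::field \<Rightarrow> (nat \<Rightarrow> 'a) \<Rightarrow> (nat \<Rightarrow> 'a)" where
  "fscale a f = (\<lambda>i. a * f i)"

lemma vector_space_fscale: "vector_space (fscale :: 'a::field \<Rightarrow> _)"
  unfolding vector_space_def fscale_def by (auto simp: fun_eq_iff algebra_simps)

definition linear_code :: "nat \<Rightarrow> (nat \<Rightarrow> 'a::field) set \<Rightarrow> bool" where
  "linear_code n C \<longleftrightarrow> C \<subseteq> {c. \<forall>i. i \<notin> {1..n} \<longrightarrow> c i = 0} \<and> module.subspace fscale C"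

definition code_dim :: "(nat \<Rightarrow> 'a::field) set \<Rightarrow> nat" where
  "code_dim C = vector_space.dim fscale C"

definition labeling :: "nat \<Rightarrow> nat \<Rightarrow> (nat \<Rightarrow> nat) \<Rightarrow> bool" where
  "labeling n s L \<longleftrightarrow> L ` {1..n} = {1..s}"

definition labelweight :: "nat \<Rightarrow> (nat \<Rightarrow> nat) \<Rightarrow> (nat \<Rightarrow> 'a::zero) \<Rightarrow> nat" where
  "labelweight n L c = card {L i | i. i \<in> {1..n} \<and> c i \<noteq> 0}"

definition code_labeldist :: "nat \<Rightarrow> (nat \<Rightarrow> nat) \<Rightarrow> (nat \<Rightarrow> 'a::zero) set \<Rightarrow> nat" where
  "code_labeldist n L C = Inf (labelweight n L ` (C - {0}))"

end

theory Submission
  imports Defs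
begin

lemma sum_fun_apply: "finite A \<Longrightarrow> (\<Sum>i\<in>A. (g i :: nat \<Rightarrow> 'a::comm_monoid_add)) x = (\<Sum>i\<in>A. g i x)"
  by (induction A rule: finite_induct) auto

lemma restr_kernel:
  fixes C :: "(nat \<Rightarrow> 'a::field) set"
  assumes lc: "linear_code n C" and T: "T \<subseteq> {1..n}" and lt: "card T < code_dim C"
  shows "\<exists>c\<in>C. c \<noteq> 0 \<and> (\<forall>i\<in>T. c i = 0)"
proof -
  interpret v: vector_space "fscale :: 'a \<Rightarrow> (nat \<Rightarrow> 'a) \<Rightarrow> _" by (rule vector_space_fscale)
  interpret p: vector_space_pair "fscale :: 'a \<Rightarrow> (nat \<Rightarrow> 'a) \<Rightarrow> _" "fscale :: 'a \<Rightarrow> (nat \<Rightarrow> 'a) \<Rightarrow> _" by unfold_locales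
  define e :: "nat \<Rightarrow> nat \<Rightarrow> 'a" where "e i = (\<lambda>j. if j = i then 1 else 0)" for i
  define r :: "(nat \<Rightarrow> 'a) \<Rightarrow> (nat \<Rightarrow> 'a)" where "r f = (\<lambda>i. if i \<in> T then f i else 0)" for f
  have lin: "Vector_Spaces.linear fscale fscale r"
    unfolding Vector_Spaces.linear_iff using vector_space_fscale by (auto simp: r_def fscale_def fun_eq_iff)
  have spn: "f \<in> v.span (e ` A)" if "finite A" "\<forall>i. i \<notin> A \<longrightarrow> f i = 0" for f A
  proof -
    have "f = (\<Sum>i\<in>A. fscale (f i) (e i))"
    proof
      fix x
      have "(\<Sum>i\<in>A. f i * (if x = i then 1 else 0)) = (if x \<in> A then f x else 0)"
        using that(1) by (simp add: if_distrib[of "\<lambda>z. f _ * z"] sum.delta cong: if_cong)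
      then show "f x = (\<Sum>i\<in>A. fscale (f i) (e i)) x"
        using that by (auto simp: sum_fun_apply fscale_def e_def)
    qed
    also have "\<dots> \<in> v.span (e ` A)"
      by (intro v.span_sum v.span_scale v.span_base) auto
    finally show ?thesis .
  qed
  have sub: "v.subspace C" and supp: "C \<subseteq> {c. \<forall>i. i \<notin> {1..n} \<longrightarrow> c i = 0}"
    using lc by (auto simp: linear_code_def)
  obtain B where B: "B \<subseteq> C" "v.independent B" "C \<subseteq> v.span B" "card B = v.dim C"
    using v.basis_exists by blast
  have "B \<subseteq> v.span (e ` {1..n})" using B(1) supp spn[of "{1..n}"] by auto
  then have finB: "finite B" using v.independent_span_bound[of "e ` {1..n}" B] B(2) by auto
  have spB: "v.span B \<subseteq> C" using v.span_minimal[OF B(1) sub] .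
  have "\<not> inj_on r (v.span B)"
  proof
    assume inj: "inj_on r (v.span B)"
    have ind: "v.independent (r ` B)"
      using p.linear_independent_injective_image[OF lin B(2) inj] .
    have "card (r ` B) = card B"
      using inj v.span_superset[of B] by (intro card_image) (auto intro: inj_on_subset)
    moreover have "r ` B \<subseteq> v.span (e ` T)"
      using T by (auto intro!: spn simp: r_def finite_subset)
    then have "card (r ` B) \<le> card (e ` T)"
      using v.independent_span_bound[of "e ` T" "r ` B"] ind T finite_subset by blast
    moreover have "card (e ` T) \<le> card T" by (rule card_image_le) (use T finite_subset in blast)
    ultimately show False using lt B(4) by (simp add: code_dim_def)
  qed
  then obtain x y where xy: "x \<in> v.span B" "y \<in> v.span B" "x \<noteq> y" "r x = r y"
    unfolding inj_on_def by blast
  show ?thesis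
  proof (intro bexI conjI ballI)
    show "x - y \<in> C" using spB xy v.span_diff by blast
    show "x - y \<noteq> 0" using xy by simp
    fix i assume "i \<in> T"
    then show "(x - y) i = 0" using xy(4) by (auto simp: r_def fun_eq_iff dest: spec[of _ i])
  qed
qed


lemma comb:
  fixes a :: "nat \<Rightarrow> nat" and S :: "nat set"
  assumes fin: "finite S" and cS: "card S = s" and m0: "0 < m" and ms: "m < s"
    and sumS: "sum a S = n" and ks: "k * s = (s - m) * n"
    and big: "\<And>\<Lambda>. \<Lambda> \<subseteq> S \<Longrightarrow> card \<Lambda> = s - m \<Longrightarrow> k \<le> sum a \<Lambda>"
  shows "\<forall>l\<in>S. s * a l = n"
proof (rule ccontr)
  assume ne: "\<not> (\<forall>l\<in>S. s * a l = n)"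
  define H where "H = {l\<in>S. n < s * a l}"
  define Lo where "Lo = {l\<in>S. s * a l < n}"
  have tot: "(\<Sum>l\<in>S. s * a l) = s * n" using sumS by (simp add: sum_distrib_left[symmetric])
  have cn: "(\<Sum>l\<in>X. n) = card X * n" for X :: "nat set" by simp
  have HL: "H \<noteq> {}"
  proof
    assume "H = {}"
    then have le: "\<forall>l\<in>S. s * a l \<le> n" by (auto simp: H_def not_less)
    from ne le obtain p where "p \<in> S" "s * a p < n" by (auto simp: le_neq_implies_less)
    then have "(\<Sum>l\<in>S. s * a l) < (\<Sum>l\<in>S. n)" using le fin by (intro sum_strict_mono_ex1) auto
    then show False using tot cS by simp
  qed
  have LH: "Lo \<noteq> {}"
  proof
    assume "Lo = {}"
    then have le: "\<forall>l\<in>S. n \<le> s * a l" by (auto simp: Lo_def not_less)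
    from ne le obtain p where "p \<in> S" "n < s * a p" by (metis le_neq_implies_less)
    then have "(\<Sum>l\<in>S. n) < (\<Sum>l\<in>S. s * a l)" using le fin by (intro sum_strict_mono_ex1) auto
    then show False using tot cS by simp
  qed
  have finH: "finite H" using fin by (simp add: H_def)
  show False
  proof (cases "m \<le> card H")
    case True
    obtain L' where L': "L' \<subseteq> H" "card L' = m" "finite L'" using obtain_subset_with_card_n[OF True] by blast
    have L'S: "L' \<subseteq> S" using L' H_def by auto
    have "L' \<noteq> {}" using L' m0 by auto
    then have "(\<Sum>l\<in>L'. n) < (\<Sum>l\<in>L'. s * a l)" using L' H_def by (intro sum_strict_mono) auto
    then have lt: "m * n < s * sum a L'" using L' by (simp add: sum_distrib_left)
    have cd: "card (S - L') = s - m" using L'S L' fin cS by (simp add: card_Diff_subset)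
    have "k \<le> sum a (S - L')" using big[OF _ cd] by auto
    moreover have "sum a (S - L') + sum a L' = n" using sum.subset_diff[OF L'S fin, of a] sumS by simp
    ultimately have "s * k + s * sum a L' \<le> s * n" by (metis add_mult_distrib2 mult_le_mono2 add_le_mono1)
    then have "s * k + m * n < s * n" using lt by linarith
    moreover have "s * n = (s - m) * n + m * n" using ms by (simp add: add_mult_distrib[symmetric])
    ultimately show False using ks by (simp add: mult.commute)
  next
    case False
    obtain p where p: "p \<in> Lo" using LH by blast
    define R where "R = S - H - {p}"
    have HS: "H \<subseteq> S" by (auto simp: H_def)
    have pS: "p \<in> S" "p \<notin> H" using p by (auto simp: Lo_def H_def)
    have "card (S - H) = s - card H" using HS finH cS by (simp add: card_Diff_subset)
    then have cR: "card R = s - card H - 1" using pS by (simp add: R_def)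
    have "s - m - 1 \<le> card R" using cR False by linarith
    then obtain L0 where L0: "L0 \<subseteq> R" "card L0 = s - m - 1" "finite L0" using obtain_subset_with_card_n by blast
    define Lm where "Lm = insert p L0"
    have pL0: "p \<notin> L0" using L0 by (auto simp: R_def)
    have cLm: "card Lm = s - m" using L0 pL0 ms by (simp add: Lm_def)
    have LmS: "Lm \<subseteq> S" using L0 pS by (auto simp: Lm_def R_def)
    have "(\<Sum>l\<in>Lm. s * a l) < (\<Sum>l\<in>Lm. n)"
    proof (rule sum_strict_mono_ex1)
      show "finite Lm" using L0 by (simp add: Lm_def)
      show "\<forall>x\<in>Lm. s * a x \<le> n" using L0 pS by (auto simp: Lm_def R_def H_def not_less)
      show "\<exists>x\<in>Lm. s * a x < n" using p by (auto simp: Lm_def Lo_def)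
    qed
    then have "s * sum a Lm < (s - m) * n" using cLm by (simp add: sum_distrib_left)
    moreover have "k \<le> sum a Lm" using big[OF LmS cLm] .
    ultimately show False using ks by (metis mult.commute mult_le_mono2 not_le)
  qed
qed


lemma ceil_div:
  assumes "1 \<le> x" "0 < j"
  shows "nat \<lceil>real x / real j\<rceil> = (x - 1) div j + 1"
proof -
  define q where "q = (x - 1) div j"
  define r where "r = (x - 1) mod j"
  have x: "x = q * j + r + 1" "r < j" using assms by (auto simp: q_def r_def)
  have "\<lceil>real x / real j\<rceil> = int (q + 1)"
  proof (rule ceiling_unique)
    have "real q * real j < real x" using x by simp
    then show "real_of_int (int (q + 1)) - 1 < real x / real j" using assms by (simp add: field_simps)
    have "real x \<le> (real q + 1) * real j" using x by (simp add: algebra_simps)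
    then show "real x / real j \<le> real_of_int (int (q + 1))" using assms by (simp add: field_simps)
  qed
  then show ?thesis by (simp add: q_def)
qed

lemma card_fibers:
  assumes "finite A" "finite \<Lambda>"
  shows "card {i\<in>A. L i \<in> \<Lambda>} = (\<Sum>l\<in>\<Lambda>. card {i\<in>A. L i = l})"
proof -
  have "{i\<in>A. L i \<in> \<Lambda>} = (\<Union>l\<in>\<Lambda>. {i\<in>A. L i = l})" by auto
  moreover have "card (\<Union>l\<in>\<Lambda>. {i\<in>A. L i = l}) = (\<Sum>l\<in>\<Lambda>. card {i\<in>A. L i = l})"
    using assms by (intro card_UN_disjoint) auto
  ultimately show ?thesis by simp
qed

theorem mainTheorem4:
  fixes s d t n :: nat and C :: "(nat \<Rightarrow> 'a::field) set" and L :: "nat \<Rightarrow> nat"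
  assumes "0 < s" and "0 < d" and "0 < t" and "d * t < s"
    and "linear_code n C"
    and "real (code_dim C) / real n = real (s - d * t) / real s"
    and "labeling n s L"
    and "code_labeldist n L C \<ge> d * t + 1"
  shows "\<exists>j>0. n = j * s \<and> code_dim C = j * (s - d * t)
           \<and> (\<forall>l\<in>{1..s}. card {i \<in> {1..n}. L i = l} = j)
           \<and> (\<exists>\<sigma>. bij_betw \<sigma> {1..n} {1..n} \<and>
                 (\<forall>x\<in>{1..n}. L (\<sigma> x) = nat \<lceil>real x / real j\<rceil>))"
proof -
  define m where "m = d * t"
  define k where "k = code_dim C"
  define a where "a l = card {i \<in> {1..n}. L i = l}" for l
  have m0: "0 < m" using assms by (simp add: m_def)
  have ms: "m < s" using assms by (simp add: m_def)
  have lab: "L ` {1..n} = {1..s}" using assms(7) by (simp add: labeling_def)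
  have Lin: "L i \<in> {1..s}" if "i \<in> {1..n}" for i using lab that by blast
  have n0: "0 < n"
  proof -
    have "1 \<in> L ` {1..n}" using lab assms(1) by auto
    then show ?thesis by auto
  qed
  have ks: "k * s = (s - m) * n"
  proof -
    have "real k * real s = real (s - m) * real n"
      using assms(6) n0 assms(1) by (simp add: k_def m_def field_simps)
    then show ?thesis by (metis of_nat_eq_iff of_nat_mult)
  qed
  have sumS: "sum a {1..s} = n"
  proof -
    have "sum a {1..s} = card {i\<in>{1..n}. L i \<in> {1..s}}" unfolding a_def by (rule card_fibers[symmetric]) auto
    also have "{i\<in>{1..n}. L i \<in> {1..s}} = {1..n}" using Lin by auto
    finally show ?thesis by simp
  qed
  have big: "k \<le> sum a \<Lambda>" if \<Lambda>: "\<Lambda> \<subseteq> {1..s}" "card \<Lambda> = s - m" for \<Lambda>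
  proof (rule ccontr)
    assume "\<not> k \<le> sum a \<Lambda>"
    define T where "T = {i\<in>{1..n}. L i \<in> \<Lambda>}"
    have finL: "finite \<Lambda>" using \<Lambda> finite_subset by blast
    have "card T = sum a \<Lambda>" unfolding T_def a_def using finL by (rule card_fibers[OF finite_atLeastAtMost])
    then have "card T < code_dim C" using \<open>\<not> k \<le> sum a \<Lambda>\<close> by (simp add: k_def)
    then obtain c where c: "c \<in> C" "c \<noteq> 0" "\<forall>i\<in>T. c i = 0"
    proof -
      have "T \<subseteq> {1..n}" by (auto simp: T_def)
      from restr_kernel[OF assms(5) this \<open>card T < code_dim C\<close>] that show thesis by blast
    qed
    have "{L i | i. i \<in> {1..n} \<and> c i \<noteq> 0} \<subseteq> {1..s} - \<Lambda>"
      using c(3) Lin by (auto simp: T_def)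
    then have "labelweight n L c \<le> card ({1..s} - \<Lambda>)"
      unfolding labelweight_def by (intro card_mono) auto
    also have "\<dots> = m" using \<Lambda> finL ms by (simp add: card_Diff_subset)
    finally have lw: "labelweight n L c \<le> m" .
    have "code_labeldist n L C \<le> labelweight n L c"
      unfolding code_labeldist_def using c by (intro cInf_lower) auto
    then show False using lw assms(8) by (simp add: m_def)
  qed
  have all: "\<forall>l\<in>{1..s}. s * a l = n"
    using comb[of "{1..s}" s m a n k] m0 ms sumS ks big by auto
  define j where "j = a 1"
  have "s * a 1 = n" using all assms(1) by simp
  then have sj: "n = j * s" by (simp add: j_def mult.commute)
  have j0: "0 < j" using sj n0 by (cases j) auto
  have aj: "a l = j" if "l \<in> {1..s}" for l
  proof -
    have "s * a l = s * j" using all that sj by (simp add: mult.commute)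
    then show ?thesis using assms(1) by simp
  qed
  have "k * s = (j * (s - m)) * s" using ks sj by (simp add: algebra_simps)
  then have kj: "k = j * (s - m)" using assms(1) by simp
  have "\<forall>l\<in>{1..s}. \<exists>g. bij_betw g {0..<j} {i \<in> {1..n}. L i = l}"
  proof
    fix l assume l: "l \<in> {1..s}"
    have "finite {i \<in> {1..n}. L i = l}" by simp
    from ex_bij_betw_nat_finite[OF this] show "\<exists>g. bij_betw g {0..<j} {i \<in> {1..n}. L i = l}"
      using aj[OF l] by (simp add: a_def)
  qed
  then obtain g where g: "\<And>l. l \<in> {1..s} \<Longrightarrow> bij_betw (g l) {0..<j} {i \<in> {1..n}. L i = l}"
    by (rule bchoice[THEN exE]) blast
  define \<sigma> where "\<sigma> x = g ((x - 1) div j + 1) ((x - 1) mod j)" for x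
  have qs: "(x - 1) div j + 1 \<in> {1..s}" if "x \<in> {1..n}" for x
  proof -
    have "x - 1 < j * s" using that sj by auto
    then have "(x - 1) div j < s" by (simp add: less_mult_imp_div_less mult.commute)
    then show ?thesis by auto
  qed
  have sx: "\<sigma> x \<in> {i \<in> {1..n}. L i = (x - 1) div j + 1}" if "x \<in> {1..n}" for x
    using bij_betwE[OF g[OF qs[OF that]]] j0 unfolding \<sigma>_def by auto
  have inj: "inj_on \<sigma> {1..n}"
  proof (rule inj_onI)
    fix x y assume xy: "x \<in> {1..n}" "y \<in> {1..n}" "\<sigma> x = \<sigma> y"
    have qe: "(x - 1) div j = (y - 1) div j" using sx[OF xy(1)] sx[OF xy(2)] xy(3) by auto
    have "inj_on (g ((x - 1) div j + 1)) {0..<j}" using g[OF qs[OF xy(1)]] by (simp add: bij_betw_def)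
    moreover have "g ((x - 1) div j + 1) ((x - 1) mod j) = g ((x - 1) div j + 1) ((y - 1) mod j)"
      using xy(3) qe unfolding \<sigma>_def by simp
    moreover have "(x - 1) mod j \<in> {0..<j}" "(y - 1) mod j \<in> {0..<j}" using j0 by auto
    ultimately have "(x - 1) mod j = (y - 1) mod j" by (rule inj_onD)
    with qe have "x - 1 = y - 1" by (metis div_mult_mod_eq)
    then show "x = y" using xy by auto
  qed
  have img: "\<sigma> ` {1..n} \<subseteq> {1..n}" using sx by auto
  have bij: "bij_betw \<sigma> {1..n} {1..n}"
    unfolding bij_betw_def using inj endo_inj_surj[OF _ img inj] by auto
  have lab2: "\<forall>x\<in>{1..n}. L (\<sigma> x) = nat \<lceil>real x / real j\<rceil>"
    using sx ceil_div j0 by auto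
  show ?thesis
    apply (rule exI[of _ j])
    using j0 sj kj aj bij lab2 unfolding k_def m_def a_def by blast
qed


end
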